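(* Let $P$ be a rooted forest on $[n]$ whose labeling is natural, let $x_1,\dots,x_n$ be strictly positive reals, and let $x_{\preceq i}=\sum_{j\preceq i}x_j$. Set $$Z_P=\prod_{i=1}^n\frac{x_{\preceq i}}{x_1+\cdots+x_i},\qquad w(\pi)=\prod_{i=1}^{n}\frac{x_1+\cdots+x_i}{x_{\pi_1}+\cdots+x_{\pi_i}}\quad(\pi\in\mathcal{L}(P)).$$ Then $Z_P$ is the partition function of the promotion graph, i.e. $\sum_{\pi\in\mathcal{L}(P)}Z_P\,w(\pi)=1$.
   Context: A rooted tree is a connected finite poset in which each element is covered by at most one element (has at most one successor); a rooted forest is a disjoint union of rooted trees. Natural labeling: $i\prec j$ implies $i<j$. $\mathcal{L}(P)=\{\pi\in S_n : i\prec j \Rightarrow \pi^{-1}_i<\pi^{-1}_j\}$, in one-line notation $\pi=\pi_1\cdots\pi_n$. (The function $w$ is the stationary state of the promotion graph Markov chain normalized by $w(e)=1$.) *)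

theory Defs
  imports "HOL-Analysis.Analysis" "HOL-Combinatorics.Permutations"
begin

text \<open>A finite poset on [n] = {1..n} is a relation R (pairs (i,j) meaning i \<preceq> j)
  that is a partial order on {1..n}.\<close>

definition strictly_below :: "(nat \<times> nat) set \<Rightarrow> nat \<Rightarrow> nat \<Rightarrow> bool" where
  "strictly_below R i j \<longleftrightarrow> (i, j) \<in> R \<and> i \<noteq> j"

definition covered_by :: "(nat \<times> nat) set \<Rightarrow> nat \<Rightarrow> nat \<Rightarrow> bool" where
  "covered_by R i j \<longleftrightarrow> strictly_below R i j \<and>
     \<not> (\<exists>k. strictly_below R i k \<and> strictly_below R k j)"

definition rooted_forest :: "nat \<Rightarrow> (nat \<times> nat) set \<Rightarrow> bool" where
  "rooted_forest n R \<longleftrightarrow> partial_order_on {1..n} R \<and>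
     (\<forall>i\<in>{1..n}. \<forall>j k. covered_by R i j \<and> covered_by R i k \<longrightarrow> j = k)"

definition natural_labeling :: "(nat \<times> nat) set \<Rightarrow> bool" where
  "natural_labeling R \<longleftrightarrow> (\<forall>i j. strictly_below R i j \<longrightarrow> i < j)"

text \<open>Linear extensions; a permutation \<pi> with one-line notation \<pi>_1 ... \<pi>_n is \<pi> 1, ..., \<pi> n.\<close>
definition linear_extensions :: "nat \<Rightarrow> (nat \<times> nat) set \<Rightarrow> (nat \<Rightarrow> nat) set" where
  "linear_extensions n R = {\<pi>. \<pi> permutes {1..n} \<and>
     (\<forall>i j. strictly_below R i j \<longrightarrow> inv \<pi> i < inv \<pi> j)}"

definition partition_Z :: "nat \<Rightarrow> (nat \<times> nat) set \<Rightarrow> (nat \<Rightarrow> real) \<Rightarrow> real" where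
  "partition_Z n R x = (\<Prod>i=1..n. (\<Sum>j\<in>{j. (j, i) \<in> R}. x j) / (\<Sum>j=1..i. x j))"

definition weight_w :: "nat \<Rightarrow> (nat \<Rightarrow> real) \<Rightarrow> (nat \<Rightarrow> nat) \<Rightarrow> real" where
  "weight_w n x \<pi> = (\<Prod>i=1..n. (\<Sum>j=1..i. x j) / (\<Sum>k=1..i. x (\<pi> k)))"

end

theory Submission
  imports Defs
begin

definition LE :: "(nat \<times> nat) set \<Rightarrow> nat set \<Rightarrow> nat list set" where
  "LE R S = {zs. distinct zs \<and> set zs = S \<and>
     (\<forall>i<length zs. \<forall>j<length zs. strictly_below R (zs!i) (zs!j) \<longrightarrow> i < j)}"

definition WW :: "(nat \<Rightarrow> real) \<Rightarrow> nat list \<Rightarrow> real" where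
  "WW x zs = (\<Prod>i=1..length zs. 1 / sum_list (map x (take i zs)))"

lemma WW_snoc: "WW x (ys @ [a]) = WW x ys / sum_list (map x (ys @ [a]))"
proof -
  have "{1..Suc (length ys)} = insert (Suc (length ys)) {1..length ys}" by auto
  then have "WW x (ys @ [a]) = 1 / sum_list (map x (ys @ [a])) *
      (\<Prod>i=1..length ys. 1 / sum_list (map x (take i (ys @ [a]))))"
    unfolding WW_def by (simp add: prod.insert)
  also have "(\<Prod>i=1..length ys. 1 / sum_list (map x (take i (ys @ [a])))) = WW x ys"
    unfolding WW_def by (rule prod.cong) auto
  finally show ?thesis by simp
qed

lemma sb_irrefl[simp]: "\<not> strictly_below R a a"
  by (simp add: strictly_below_def)

lemma LE_snoc:
  "ys @ [a] \<in> LE R S \<longleftrightarrow> a \<in> S \<and> (\<forall>b\<in>S. \<not> strictly_below R a b) \<and> ys \<in> LE R (S - {a})"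
proof
  assume H: "ys @ [a] \<in> LE R S"
  then have d: "distinct ys" "a \<notin> set ys" and s: "set ys \<union> {a} = S"
    and o: "\<And>i j. i < Suc (length ys) \<Longrightarrow> j < Suc (length ys) \<Longrightarrow>
       strictly_below R ((ys@[a])!i) ((ys@[a])!j) \<Longrightarrow> i < j"
    unfolding LE_def by auto
  have "\<forall>b\<in>S. \<not> strictly_below R a b"
  proof
    fix b assume "b \<in> S"
    show "\<not> strictly_below R a b"
    proof
      assume sb: "strictly_below R a b"
      then have "b \<noteq> a" by (auto simp: strictly_below_def)
      with \<open>b \<in> S\<close> s obtain j where j: "j < length ys" "ys ! j = b"
        by (auto simp: in_set_conv_nth)
      have "length ys < j"
        using o[of "length ys" j] sb j by (simp add: nth_append)
      with j show False by simp
    qed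
  qed
  moreover have "ys \<in> LE R (S - {a})"
    unfolding LE_def
  proof (intro CollectI conjI allI impI)
    show "distinct ys" by fact
    show "set ys = S - {a}" using s d by auto
    fix i j assume "i < length ys" "j < length ys" "strictly_below R (ys ! i) (ys ! j)"
    then show "i < j" using o[of i j] by (simp add: nth_append)
  qed
  ultimately show "a \<in> S \<and> (\<forall>b\<in>S. \<not> strictly_below R a b) \<and> ys \<in> LE R (S - {a})"
    using s by auto
next
  assume H: "a \<in> S \<and> (\<forall>b\<in>S. \<not> strictly_below R a b) \<and> ys \<in> LE R (S - {a})"
  then have d: "distinct ys" and s: "set ys = S - {a}" and a: "a \<in> S"
    and m: "\<And>b. b \<in> S \<Longrightarrow> \<not> strictly_below R a b"
    and o: "\<And>i j. i < length ys \<Longrightarrow> j < length ys \<Longrightarrow>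
       strictly_below R (ys!i) (ys!j) \<Longrightarrow> i < j"
    unfolding LE_def by auto
  show "ys @ [a] \<in> LE R S"
    unfolding LE_def
  proof (intro CollectI conjI allI impI)
    show "distinct (ys @ [a])" using d s by auto
    show "set (ys @ [a]) = S" using s a by auto
    fix i j assume i: "i < length (ys @ [a])" and j: "j < length (ys @ [a])"
      and sb: "strictly_below R ((ys @ [a]) ! i) ((ys @ [a]) ! j)"
    show "i < j"
    proof (cases "i < length ys")
      case True
      show ?thesis
      proof (cases "j < length ys")
        case True
        with \<open>i < length ys\<close> sb show ?thesis using o by (simp add: nth_append)
      next
        case False
        with j \<open>i < length ys\<close> show ?thesis by simp
      qed
    next
      case False
      then have ii: "i = length ys" using i by simp
      have ai: "(ys @ [a]) ! i = a" using ii by simp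
      have "(ys @ [a]) ! j \<in> set (ys @ [a])" using j by (rule nth_mem)
      also have "set (ys @ [a]) = S" using s a by auto
      finally have "\<not> strictly_below R a ((ys @ [a]) ! j)" using m by blast
      then have False using sb ai by simp
      then show ?thesis ..
    qed
  qed
qed

definition DD :: "(nat \<times> nat) set \<Rightarrow> nat \<Rightarrow> nat set" where
  "DD R i = {j. (j, i) \<in> R}"

lemma LE_empty: "LE R {} = {[]}"
  unfolding LE_def by auto

lemma LE_finite: "finite S \<Longrightarrow> finite (LE R S)"
proof -
  assume f: "finite S"
  have "LE R S \<subseteq> {xs. set xs \<subseteq> S \<and> length xs = card S}"
    unfolding LE_def using distinct_card by fastforce
  then show ?thesis using finite_lists_length_eq[OF f] finite_subset by blast
qed

lemma main_sum:
  assumes "finite S"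
    and "\<forall>i j. strictly_below R i j \<longrightarrow> i < j"
    and "trans R"
    and "\<forall>i j k. (i, j) \<in> R \<longrightarrow> (i, k) \<in> R \<longrightarrow> (j, k) \<in> R \<or> (k, j) \<in> R"
  shows "(\<forall>i\<in>S. DD R i \<subseteq> S) \<Longrightarrow> (\<forall>i\<in>S. (i, i) \<in> R) \<Longrightarrow> (\<forall>i\<in>S. x i > 0) \<Longrightarrow>
     (\<Sum>zs\<in>LE R S. WW x zs) = (\<Prod>i\<in>S. 1 / sum x (DD R i))"
  using assms(1)
proof (induction S rule: finite_remove_induct)
  case empty
  then show ?case by (simp add: LE_empty WW_def)
next
  case (remove S)
  note lab = assms(2) and tr = assms(3) and cmp = assms(4)
  define M where "M = {a\<in>S. \<forall>b\<in>S. \<not> strictly_below R a b}"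
  have fM: "finite M" using remove.hyps(1) M_def by simp
  have MS: "M \<subseteq> S" unfolding M_def by auto
  define X where "X = sum x S"
  have Xpos: "X > 0" unfolding X_def
    using remove.hyps remove.prems(3) by (simp add: sum_pos)
  have dpos: "sum x (DD R i) > 0" if "i \<in> S" for i
  proof -
    have "i \<in> DD R i" using remove.prems(2) that by (simp add: DD_def)
    moreover have "finite (DD R i)" using remove.prems(1) that remove.hyps(1) finite_subset by blast
    moreover have "\<forall>j\<in>DD R i. x j > 0" using remove.prems(1,3) that by blast
    ultimately show ?thesis using sum_pos2[of "DD R i" i x] by fastforce
  qed
  have eqLE: "LE R S = (\<lambda>(a, ys). ys @ [a]) ` (SIGMA a:M. LE R (S - {a}))"
  proof
    show "LE R S \<subseteq> (\<lambda>(a, ys). ys @ [a]) ` (SIGMA a:M. LE R (S - {a}))"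
    proof
      fix zs assume z: "zs \<in> LE R S"
      then have "zs \<noteq> []" using remove.hyps(2) by (auto simp: LE_def)
      then have zz: "zs = butlast zs @ [last zs]" by simp
      then have "butlast zs @ [last zs] \<in> LE R S" using z by simp
      then have "last zs \<in> M" "butlast zs \<in> LE R (S - {last zs})"
        unfolding LE_snoc M_def by auto
      then show "zs \<in> (\<lambda>(a, ys). ys @ [a]) ` (SIGMA a:M. LE R (S - {a}))"
        using zz by (auto intro!: image_eqI[where x="(last zs, butlast zs)"])
    qed
    show "(\<lambda>(a, ys). ys @ [a]) ` (SIGMA a:M. LE R (S - {a})) \<subseteq> LE R S"
      using LE_snoc unfolding M_def by auto
  qed
  have inj: "inj_on (\<lambda>(a, ys). ys @ [a]) (SIGMA a:M. LE R (S - {a}))"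
    by (auto simp: inj_on_def)
  have "(\<Sum>zs\<in>LE R S. WW x zs) = (\<Sum>(a, ys)\<in>(SIGMA a:M. LE R (S - {a})). WW x (ys @ [a]))"
    unfolding eqLE by (subst sum.reindex[OF inj]) (simp add: case_prod_unfold)
  also have "\<dots> = (\<Sum>a\<in>M. \<Sum>ys\<in>LE R (S - {a}). WW x (ys @ [a]))"
    by (rule sum.Sigma[symmetric]) (use fM remove.hyps(1) LE_finite in auto)
  also have "\<dots> = (\<Sum>a\<in>M. (\<Sum>ys\<in>LE R (S - {a}). WW x ys) / X)"
  proof (rule sum.cong[OF refl])
    fix a assume "a \<in> M"
    show "(\<Sum>ys\<in>LE R (S - {a}). WW x (ys @ [a])) = (\<Sum>ys\<in>LE R (S - {a}). WW x ys) / X"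
      unfolding sum_divide_distrib
    proof (rule sum.cong[OF refl])
      fix ys assume "ys \<in> LE R (S - {a})"
      then have "ys @ [a] \<in> LE R S" using \<open>a \<in> M\<close> LE_snoc unfolding M_def by blast
      then have "distinct (ys @ [a])" "set (ys @ [a]) = S" by (auto simp: LE_def)
      then have "sum_list (map x (ys @ [a])) = X"
        unfolding X_def using sum.distinct_set_conv_list by metis
      then show "WW x (ys @ [a]) = WW x ys / X" by (simp add: WW_snoc)
    qed
  qed
  also have "\<dots> = (\<Sum>a\<in>M. sum x (DD R a) * (\<Prod>i\<in>S. 1 / sum x (DD R i)) / X)"
  proof (rule sum.cong[OF refl])
    fix a assume aM: "a \<in> M"
    then have aS: "a \<in> S" by (simp add: M_def)
    have "(\<Sum>ys\<in>LE R (S - {a}). WW x ys) = (\<Prod>i\<in>S - {a}. 1 / sum x (DD R i))"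
    proof (rule remove.IH[OF aS])
      show "\<forall>i\<in>S - {a}. DD R i \<subseteq> S - {a}"
      proof
        fix i assume i: "i \<in> S - {a}"
        show "DD R i \<subseteq> S - {a}"
        proof
          fix j assume j: "j \<in> DD R i"
          have "j \<noteq> a"
          proof
            assume "j = a"
            then have "strictly_below R a i" using j i by (auto simp: DD_def strictly_below_def)
            then show False using aM i by (auto simp: M_def)
          qed
          then show "j \<in> S - {a}" using j i remove.prems(1) by auto
        qed
      qed
      show "\<forall>i\<in>S - {a}. (i, i) \<in> R" using remove.prems(2) by auto
      show "\<forall>i\<in>S - {a}. 0 < x i" using remove.prems(3) by auto
    qed
    also have "\<dots> = sum x (DD R a) * (\<Prod>i\<in>S. 1 / sum x (DD R i))"
      using prod.remove[OF remove.hyps(1) aS, of "\<lambda>i. 1 / sum x (DD R i)"] dpos[OF aS] by simp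
    finally show "(\<Sum>ys\<in>LE R (S - {a}). WW x ys) / X = sum x (DD R a) * (\<Prod>i\<in>S. 1 / sum x (DD R i)) / X"
      by simp
  qed
  also have "\<dots> = (\<Sum>a\<in>M. sum x (DD R a)) * (\<Prod>i\<in>S. 1 / sum x (DD R i)) / X"
    by (simp add: sum_divide_distrib sum_distrib_right)
  also have "(\<Sum>a\<in>M. sum x (DD R a)) = X"
  proof -
    have U: "(\<Union>a\<in>M. DD R a) = S"
    proof
      show "(\<Union>a\<in>M. DD R a) \<subseteq> S" using MS remove.prems(1) by blast
      show "S \<subseteq> (\<Union>a\<in>M. DD R a)"
      proof
        fix i assume iS: "i \<in> S"
        define B where "B = {b\<in>S. (i, b) \<in> R}"
        have fB: "finite B" using remove.hyps(1) B_def by simp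
        have iB: "i \<in> B" using iS remove.prems(2) B_def by simp
        define b where "b = Max B"
        have bB: "b \<in> B" using fB iB b_def Max_in by blast
        have "b \<in> M"
          unfolding M_def
        proof (intro CollectI conjI ballI)
          show "b \<in> S" using bB B_def by simp
          fix c assume cS: "c \<in> S"
          show "\<not> strictly_below R b c"
          proof
            assume sb: "strictly_below R b c"
            then have "b < c" using lab by blast
            have "(i, c) \<in> R" using sb bB tr unfolding B_def strictly_below_def trans_def by blast
            then have "c \<in> B" using cS B_def by simp
            then have "c \<le> b" using fB b_def by simp
            then show False using \<open>b < c\<close> by simp
          qed
        qed
        moreover have "i \<in> DD R b" using bB B_def DD_def by simp
        ultimately show "i \<in> (\<Union>a\<in>M. DD R a)" by blast
      qed
    qed
    have disj: "\<forall>a\<in>M. \<forall>a'\<in>M. a \<noteq> a' \<longrightarrow> DD R a \<inter> DD R a' = {}"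
    proof (intro ballI impI)
      fix a a' assume a: "a \<in> M" and a': "a' \<in> M" and ne: "a \<noteq> a'"
      show "DD R a \<inter> DD R a' = {}"
      proof (rule ccontr)
        assume "DD R a \<inter> DD R a' \<noteq> {}"
        then obtain j where "(j, a) \<in> R" "(j, a') \<in> R" by (auto simp: DD_def)
        then have "(a, a') \<in> R \<or> (a', a) \<in> R" using cmp by blast
        then show False using a a' ne unfolding M_def strictly_below_def by auto
      qed
    qed
    have fD: "\<forall>a\<in>M. finite (DD R a)"
      using MS remove.prems(1) remove.hyps(1) finite_subset by blast
    have "sum x (\<Union>a\<in>M. DD R a) = (\<Sum>a\<in>M. sum x (DD R a))"
      by (rule sum.UNION_disjoint[OF fM fD disj])
    then show ?thesis using U X_def by simp
  qed
  finally show ?case using Xpos by simp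
qed

lemma forest_cmp:
  assumes rf: "rooted_forest n R" and nl: "natural_labeling R"
  shows "(i, j) \<in> R \<Longrightarrow> (i, k) \<in> R \<Longrightarrow> (j, k) \<in> R \<or> (k, j) \<in> R"
proof (induction "n - i" arbitrary: i j k rule: less_induct)
  case less
  have po: "partial_order_on {1..n} R" and cu: "\<forall>i\<in>{1..n}. \<forall>j k. covered_by R i j \<and> covered_by R i k \<longrightarrow> j = k"
    using rf by (auto simp: rooted_forest_def)
  have sub: "R \<subseteq> {1..n} \<times> {1..n}" and tr: "trans R" and rf': "refl_on {1..n} R"
    using partial_order_onD[OF po] by auto
  have lab: "\<And>a b. strictly_below R a b \<Longrightarrow> a < b" using nl by (simp add: natural_labeling_def)
  show ?case
  proof (cases "j = i \<or> k = i")
    case True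
    then show ?thesis using less.prems by auto
  next
    case False
    then have sj: "strictly_below R i j" and sk: "strictly_below R i k"
      using less.prems by (auto simp: strictly_below_def)
    have iI: "i \<in> {1..n}" using less.prems sub by auto
    define cov where "cov u = (LEAST v. strictly_below R i v \<and> (v, u) \<in> R)" for u
    have covP: "strictly_below R i (cov u) \<and> (cov u, u) \<in> R \<and> covered_by R i (cov u)"
      if su: "strictly_below R i u" for u
    proof -
      have "u \<in> {1..n}" using su sub by (auto simp: strictly_below_def)
      then have "(u, u) \<in> R" using rf' by (simp add: refl_on_def)
      then have ex: "strictly_below R i u \<and> (u, u) \<in> R" using su by simp
      have c1: "strictly_below R i (cov u) \<and> (cov u, u) \<in> R"
        unfolding cov_def by (rule LeastI[of _ u], rule ex)
      have "\<not> (\<exists>k'. strictly_below R i k' \<and> strictly_below R k' (cov u))"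
      proof
        assume "\<exists>k'. strictly_below R i k' \<and> strictly_below R k' (cov u)"
        then obtain k' where k': "strictly_below R i k'" "strictly_below R k' (cov u)" by blast
        then have "(k', u) \<in> R" using c1 tr unfolding strictly_below_def trans_def by blast
        then have "cov u \<le> k'" unfolding cov_def using k'(1) by (simp add: Least_le)
        moreover have "k' < cov u" using lab k'(2) by blast
        ultimately show False by simp
      qed
      then show ?thesis using c1 by (simp add: covered_by_def)
    qed
    have "cov j = cov k" using cu iI covP[OF sj] covP[OF sk] by blast
    then obtain c where cj: "(c, j) \<in> R" and ck: "(c, k) \<in> R" and ic: "strictly_below R i c"
      using covP[OF sj] covP[OF sk] by metis
    have "i < c" using lab ic by blast
    moreover have "c \<le> n" using cj sub by auto
    ultimately have "n - c < n - i" by simp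
    then show ?thesis using less.hyps cj ck by blast
  qed
qed

lemma WW_perm: "WW x (map \<pi> [1..<m+1]) = (\<Prod>i=1..m. 1 / (\<Sum>k=1..i. x (\<pi> k)))"
  unfolding WW_def
proof (rule prod.cong)
  show "{1..length (map \<pi> [1..<m + 1])} = {1..m}" by simp
  fix i assume "i \<in> {1..m}"
  then have "take i (map \<pi> [1..<m + 1]) = map \<pi> [1..<i+1]" by (simp del: upt_Suc add: take_map take_upt)
  moreover have "sum_list (map x (map \<pi> [1..<i+1])) = (\<Sum>k=1..i. x (\<pi> k))"
    by (simp del: upt_Suc add: interv_sum_list_conv_sum_set_nat atLeastLessThanSuc_atLeastAtMost)
  ultimately show "1 / sum_list (map x (take i (map \<pi> [1..<m + 1]))) = 1 / (\<Sum>k=1..i. x (\<pi> k))"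
    by simp
qed

theorem theorem5p1:
  fixes n :: nat and R :: "(nat \<times> nat) set" and x :: "nat \<Rightarrow> real"
  assumes "rooted_forest n R"
    and "natural_labeling R"
    and "\<And>i. i \<in> {1..n} \<Longrightarrow> x i > 0"
  shows "(\<Sum>\<pi>\<in>linear_extensions n R. partition_Z n R x * weight_w n x \<pi>) = 1"
proof -
  have po: "partial_order_on {1..n} R" using assms(1) by (auto simp: rooted_forest_def)
  have sub: "R \<subseteq> {1..n} \<times> {1..n}" and tr: "trans R" and rf': "refl_on {1..n} R"
    using partial_order_onD[OF po] by auto
  have lab: "\<forall>a b. strictly_below R a b \<longrightarrow> a < b" using assms(2) by (simp add: natural_labeling_def)
  have cmp: "\<forall>i j k. (i, j) \<in> R \<longrightarrow> (i, k) \<in> R \<longrightarrow> (j, k) \<in> R \<or> (k, j) \<in> R"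
    using forest_cmp[OF assms(1,2)] by blast
  have DDsub: "\<forall>i\<in>{1..n}. DD R i \<subseteq> {1..n}" using sub by (auto simp: DD_def)
  have refl: "\<forall>i\<in>{1..n}. (i, i) \<in> R" using rf' by (simp add: refl_on_def)
  have M: "(\<Sum>zs\<in>LE R {1..n}. WW x zs) = (\<Prod>i\<in>{1..n}. 1 / sum x (DD R i))"
    using main_sum[OF finite_atLeastAtMost lab tr cmp DDsub refl] assms(3) by blast
  define P where "P = (\<Prod>i\<in>{1..n}. sum x (DD R i))"
  have dpos: "sum x (DD R i) > 0" if "i \<in> {1..n}" for i
  proof -
    have "i \<in> DD R i" using refl that by (simp add: DD_def)
    moreover have "finite (DD R i)" using DDsub that finite_subset by blast
    moreover have "\<forall>j\<in>DD R i. x j > 0" using DDsub assms(3) that by blast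
    ultimately show ?thesis using sum_pos2[of "DD R i" i x] by fastforce
  qed
  have Apos: "(\<Sum>j=1..i. x j) > 0" if "i \<in> {1..n}" for i
    using that assms(3) by (intro sum_pos) auto
  have tm: "partition_Z n R x * weight_w n x \<pi> = P * WW x (map \<pi> [1..<n+1])" for \<pi>
  proof -
    have "partition_Z n R x * weight_w n x \<pi> =
      (\<Prod>i=1..n. (sum x (DD R i) / (\<Sum>j=1..i. x j)) * ((\<Sum>j=1..i. x j) / (\<Sum>k=1..i. x (\<pi> k))))"
      unfolding partition_Z_def weight_w_def DD_def by (rule prod.distrib[symmetric])
    also have "\<dots> = (\<Prod>i=1..n. sum x (DD R i) * (1 / (\<Sum>k=1..i. x (\<pi> k))))"
      using Apos by (intro prod.cong) force+
    also have "\<dots> = P * WW x (map \<pi> [1..<n+1])"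
      unfolding WW_perm P_def by (rule prod.distrib)
    finally show ?thesis .
  qed
  define h where "h \<pi> = map \<pi> [1..<n+1]" for \<pi> :: "nat \<Rightarrow> nat"
  have inj: "inj_on h (linear_extensions n R)"
  proof (rule inj_onI)
    fix p q assume p: "p \<in> linear_extensions n R" and q: "q \<in> linear_extensions n R" and e: "h p = h q"
    have pp: "p permutes {1..n}" and qp: "q permutes {1..n}" using p q by (auto simp: linear_extensions_def)
    show "p = q"
    proof
      fix k show "p k = q k"
      proof (cases "k \<in> {1..n}")
        case True
        then have "h p ! (k - 1) = p k" "h q ! (k - 1) = q k" by (auto simp del: upt_Suc simp: h_def)
        then show ?thesis using e by simp
      next
        case False
        then show ?thesis using pp qp by (simp add: permutes_def)
      qed
    qed
  qed
  have img: "h ` linear_extensions n R = LE R {1..n}"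
  proof
    show "h ` linear_extensions n R \<subseteq> LE R {1..n}"
    proof
      fix zs assume "zs \<in> h ` linear_extensions n R"
      then obtain p where p: "p \<in> linear_extensions n R" and z: "zs = h p" by blast
      have pp: "p permutes {1..n}" and le: "\<And>i j. strictly_below R i j \<Longrightarrow> inv p i < inv p j"
        using p by (auto simp: linear_extensions_def)
      show "zs \<in> LE R {1..n}"
        unfolding LE_def
      proof (intro CollectI conjI allI impI)
        show "distinct zs" unfolding z h_def using permutes_inj[OF pp]
          by (simp add: distinct_map inj_on_def)
        have "set zs = p ` {1..n}" unfolding z h_def by (auto simp del: upt_Suc)
        then show "set zs = {1..n}" using permutes_image[OF pp] by simp
        fix i j assume i: "i < length zs" and j: "j < length zs"
          and sb: "strictly_below R (zs ! i) (zs ! j)"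
        have "zs ! i = p (i+1)" "zs ! j = p (j+1)" using i j unfolding z h_def by (auto simp del: upt_Suc)
        then have "inv p (p (i+1)) < inv p (p (j+1))" using le sb by simp
        then show "i < j" using permutes_inverses(2)[OF pp] by simp
      qed
    qed
    show "LE R {1..n} \<subseteq> h ` linear_extensions n R"
    proof
      fix zs assume z: "zs \<in> LE R {1..n}"
      then have d: "distinct zs" and s: "set zs = {1..n}"
        and o: "\<And>i j. i < length zs \<Longrightarrow> j < length zs \<Longrightarrow> strictly_below R (zs!i) (zs!j) \<Longrightarrow> i < j"
        by (auto simp: LE_def)
      have len: "length zs = n" using distinct_card[OF d] s by simp
      define p where "p k = (if k \<in> {1..n} then zs ! (k - 1) else k)" for k
      have injp: "inj_on p {1..n}"
      proof (rule inj_onI)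
        fix a b assume a: "a \<in> {1..n}" and b: "b \<in> {1..n}" and e: "p a = p b"
        then have "zs ! (a - 1) = zs ! (b - 1)" by (simp add: p_def)
        then have "a - 1 = b - 1" using nth_eq_iff_index_eq[OF d] a b len by auto
        then show "a = b" using a b by auto
      qed
      have imgp: "p ` {1..n} = {1..n}"
      proof
        show "p ` {1..n} \<subseteq> {1..n}"
        proof
          fix y assume "y \<in> p ` {1..n}"
          then obtain a where a: "a \<in> {1..n}" "y = p a" by blast
          then have "y = zs ! (a - 1)" by (simp add: p_def)
          moreover have "a - 1 < length zs" using a len by auto
          ultimately show "y \<in> {1..n}" using s nth_mem by blast
        qed
        show "{1..n} \<subseteq> p ` {1..n}"
        proof
          fix y assume "y \<in> {1..n}"
          then obtain t where t: "t < length zs" "zs ! t = y" using s by (metis in_set_conv_nth)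
          then have "p (t + 1) = y" "t + 1 \<in> {1..n}" using len by (auto simp: p_def)
          then show "y \<in> p ` {1..n}" by force
        qed
      qed
      have pp: "p permutes {1..n}"
        proof (rule bij_imp_permutes)
        show "bij_betw p {1..n} {1..n}" using injp imgp by (simp add: bij_betw_def)
      qed (auto simp add: p_def)
      have "p \<in> linear_extensions n R"
        unfolding linear_extensions_def
      proof (intro CollectI conjI allI impI)
        show "p permutes {1..n}" by fact
        fix i j assume sb: "strictly_below R i j"
        then have "i \<in> {1..n}" "j \<in> {1..n}" using sub by (auto simp: strictly_below_def)
        then obtain a b where a: "a \<in> {1..n}" "i = p a" and b: "b \<in> {1..n}" "j = p b"
          using imgp by blast
        have "strictly_below R (zs ! (a - 1)) (zs ! (b - 1))" using sb a b by (simp add: p_def)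
        then have "a - 1 < b - 1" using o a b len by auto
        then show "inv p i < inv p j" using a b permutes_inverses(2)[OF pp] by simp
      qed
      moreover have "h p = zs"
        unfolding h_def by (rule nth_equalityI) (auto simp del: upt_Suc simp: len p_def)
      ultimately show "zs \<in> h ` linear_extensions n R" by blast
    qed
  qed
  have "(\<Sum>\<pi>\<in>linear_extensions n R. partition_Z n R x * weight_w n x \<pi>)
      = P * (\<Sum>\<pi>\<in>linear_extensions n R. WW x (h \<pi>))"
    unfolding tm h_def by (simp add: sum_distrib_left)
  also have "(\<Sum>\<pi>\<in>linear_extensions n R. WW x (h \<pi>)) = (\<Sum>zs\<in>LE R {1..n}. WW x zs)"
    using sum.reindex[OF inj, of "WW x"] img by simp
  also have "P * \<dots> = (\<Prod>i\<in>{1..n}. sum x (DD R i) * (1 / sum x (DD R i)))"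
    unfolding M P_def by (rule prod.distrib[symmetric])
  also have "\<dots> = 1" using dpos by (intro prod.neutral) force
  finally show ?thesis .
qed

end
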